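(* Let $A$ be a strongly AUF algebra, let $M\in\mathrm{Coh}_{\mathrm L}(A)$ be a projective generator of $\mathrm{Coh}_{\mathrm L}(A)$, and let $B=\mathrm{End}_{A,-}(M)^{\mathrm{op}}$, so that $M$ is an $A$-$B$ bimodule. Let $\psi\in\mathrm{SLF}(A)$ and let ${}^\psi\mathrm{Tr}\in\mathrm{SLF}(B)$ be the right pseudotrace associated to $\psi$ and $M$. Then $\psi$ is non-degenerate if and only if ${}^\psi\mathrm{Tr}$ is non-degenerate.
   Context: All algebras are associative $\mathbb C$-algebras, not necessarily unital. An idempotent is an element $e$ with $e^2=e$. An algebra $A$ is AUF if there is a family $(e_i)_{i\in\mathfrak I}$ of mutually orthogonal idempotents with $\dim e_iAe_j<\infty$ for all $i,j$ and $A=\sum_{i,j}e_iAe_j$. A left $A$-module $M$ is quasicoherent if $\xi\in A\xi$ for all $\xi\in M$, coherent if quasicoherent and finitely generated; $\mathrm{Coh}_{\mathrm L}(A)$ is the category of coherent left $A$-modules. Irreducible means nonzero with no nonzero proper submodules. An idempotent $e\in A$ is generating if every irreducible quasicoherent left $A$-module is a quotient of $Ae$; $A$ is strongly AUF if it is AUF and has a generating idempotent. A projective generator of $\mathrm{Coh}_{\mathrm L}(A)$ is an object that is projective as a left $A$-module and such that every object of $\mathrm{Coh}_{\mathrm L}(A)$ is a quotient of a finite direct sum of copies of it. $B=\mathrm{End}_{A,-}(M)^{\mathrm{op}}$ (left $A$-module endomorphisms, opposite multiplication) acts on the right of $M$ by $\xi\cdot T=T(\xi)$. $\mathrm{SLF}(C)$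 is the space of linear $\phi:C\to\mathbb C$ with $\phi(xy)=\phi(yx)$; such $\phi$ is non-degenerate if $\{x\in C:\phi(xy)=0\ \forall y\in C\}=0$. Right pseudotrace: choose an idempotent $e\in A$ and finitely many left $A$-module maps $\beta_j:Ae\to M$, $\check\beta^j:M\to Ae$ with $\sum_j\beta_j\circ\check\beta^j=\mathrm{id}_M$ (such exist); then ${}^\psi\mathrm{Tr}(y)=\sum_j\psi\big(\check\beta^j(\beta_j(e)y)\big)$ for $y\in B$, which is independent of the choices and lies in $\mathrm{SLF}(B)$. *)

theory Defs
  imports Complex_Main
begin

text \<open>The algebra A is the whole type 'a (a non-unital ring) with a complex
 scalar multiplication sc making it an associative C-algebra.\<close>

definition calg :: "(complex \<Rightarrow> 'a::ring \<Rightarrow> 'a) \<Rightarrow> bool" where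
  "calg sc \<longleftrightarrow>
     (\<forall>c x y. sc c (x + y) = sc c x + sc c y) \<and>
     (\<forall>c d x. sc (c + d) x = sc c x + sc d x) \<and>
     (\<forall>c d x. sc (c * d) x = sc c (sc d x)) \<and>
     (\<forall>x. sc 1 x = x) \<and>
     (\<forall>c x y. sc c (x * y) = sc c x * y) \<and>
     (\<forall>c x y. sc c (x * y) = x * sc c y)"

definition cspan :: "(complex \<Rightarrow> 'a::ring \<Rightarrow> 'a) \<Rightarrow> 'a set \<Rightarrow> 'a set" where
  "cspan sc S = {x. \<exists>F c. finite F \<and> F \<subseteq> S \<and> x = (\<Sum>v\<in>F. sc (c v) v)}"

definition fin_dim :: "(complex \<Rightarrow> 'a::ring \<Rightarrow> 'a) \<Rightarrow> 'a set \<Rightarrow> bool" where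
  "fin_dim sc S \<longleftrightarrow> (\<exists>F. finite F \<and> F \<subseteq> S \<and> S \<subseteq> cspan sc F)"

definition corner :: "'a::ring \<Rightarrow> 'a \<Rightarrow> 'a set" where
  "corner e f = {e * a * f | a. True}"

text \<open>AUF: the family of mutually orthogonal idempotents is represented by
 its range E (mutual orthogonality makes repetitions of nonzero members impossible).\<close>
definition AUF :: "(complex \<Rightarrow> 'a::ring \<Rightarrow> 'a) \<Rightarrow> bool" where
  "AUF sc \<longleftrightarrow> (\<exists>E::'a set.
      (\<forall>e\<in>E. e * e = e) \<and>
      (\<forall>e\<in>E. \<forall>f\<in>E. e \<noteq> f \<longrightarrow> e * f = 0) \<and>
      (\<forall>e\<in>E. \<forall>f\<in>E. fin_dim sc (corner e f)) \<and>
      (\<forall>a. \<exists>F g. finite F \<and> F \<subseteq> E \<times> E \<and>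
             (\<forall>p\<in>F. g p \<in> corner (fst p) (snd p)) \<and> a = (\<Sum>p\<in>F. g p)))"

record ('a, 'u) amod =
  mcarrier :: "'u set"
  madd :: "'u \<Rightarrow> 'u \<Rightarrow> 'u"
  mzero :: "'u"
  msc :: "complex \<Rightarrow> 'u \<Rightarrow> 'u"
  mact :: "'a \<Rightarrow> 'u \<Rightarrow> 'u"

definition is_amod :: "(complex \<Rightarrow> 'a::ring \<Rightarrow> 'a) \<Rightarrow> ('a, 'u) amod \<Rightarrow> bool" where
  "is_amod sc M \<longleftrightarrow> (let C = mcarrier M in
     mzero M \<in> C \<and>
     (\<forall>x\<in>C. \<forall>y\<in>C. madd M x y \<in> C) \<and>
     (\<forall>c. \<forall>x\<in>C. msc M c x \<in> C) \<and>
     (\<forall>a. \<forall>x\<in>C. mact M a x \<in> C) \<and>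
     (\<forall>x\<in>C. \<forall>y\<in>C. \<forall>z\<in>C. madd M (madd M x y) z = madd M x (madd M y z)) \<and>
     (\<forall>x\<in>C. \<forall>y\<in>C. madd M x y = madd M y x) \<and>
     (\<forall>x\<in>C. madd M (mzero M) x = x) \<and>
     (\<forall>x\<in>C. madd M x (msc M (-1) x) = mzero M) \<and>
     (\<forall>c. \<forall>x\<in>C. \<forall>y\<in>C. msc M c (madd M x y) = madd M (msc M c x) (msc M c y)) \<and>
     (\<forall>c d. \<forall>x\<in>C. msc M (c + d) x = madd M (msc M c x) (msc M d x)) \<and>
     (\<forall>c d. \<forall>x\<in>C. msc M (c * d) x = msc M c (msc M d x)) \<and>
     (\<forall>x\<in>C. msc M 1 x = x) \<and>
     (\<forall>a. \<forall>x\<in>C. \<forall>y\<in>C. mact M a (madd M x y) = madd M (mact M a x) (mact M a y)) \<and>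
     (\<forall>a b. \<forall>x\<in>C. mact M (a + b) x = madd M (mact M a x) (mact M b x)) \<and>
     (\<forall>a b. \<forall>x\<in>C. mact M (a * b) x = mact M a (mact M b x)) \<and>
     (\<forall>c a. \<forall>x\<in>C. mact M (sc c a) x = msc M c (mact M a x)) \<and>
     (\<forall>c a. \<forall>x\<in>C. mact M a (msc M c x) = msc M c (mact M a x)))"

definition amod_hom :: "('a, 'u) amod \<Rightarrow> ('a, 'v) amod \<Rightarrow> ('u \<Rightarrow> 'v) \<Rightarrow> bool" where
  "amod_hom M N f \<longleftrightarrow>
     (\<forall>x\<in>mcarrier M. f x \<in> mcarrier N) \<and>
     (\<forall>x\<in>mcarrier M. \<forall>y\<in>mcarrier M. f (madd M x y) = madd N (f x) (f y)) \<and>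
     (\<forall>c. \<forall>x\<in>mcarrier M. f (msc M c x) = msc N c (f x)) \<and>
     (\<forall>a. \<forall>x\<in>mcarrier M. f (mact M a x) = mact N a (f x))"

definition quasicoherent :: "('a, 'u) amod \<Rightarrow> bool" where
  "quasicoherent M \<longleftrightarrow> (\<forall>x\<in>mcarrier M. \<exists>a. x = mact M a x)"

definition submod :: "('a, 'u) amod \<Rightarrow> 'u set \<Rightarrow> bool" where
  "submod M S \<longleftrightarrow> S \<subseteq> mcarrier M \<and> mzero M \<in> S \<and>
     (\<forall>x\<in>S. \<forall>y\<in>S. madd M x y \<in> S) \<and>
     (\<forall>c. \<forall>x\<in>S. msc M c x \<in> S) \<and>
     (\<forall>a. \<forall>x\<in>S. mact M a x \<in> S)"

definition gen_submod :: "('a, 'u) amod \<Rightarrow> 'u set \<Rightarrow> 'u set" where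
  "gen_submod M X = \<Inter>{S. submod M S \<and> X \<subseteq> S}"

definition fin_generated :: "('a, 'u) amod \<Rightarrow> bool" where
  "fin_generated M \<longleftrightarrow> (\<exists>X. finite X \<and> X \<subseteq> mcarrier M \<and> gen_submod M X = mcarrier M)"

definition coherent :: "('a, 'u) amod \<Rightarrow> bool" where
  "coherent M \<longleftrightarrow> quasicoherent M \<and> fin_generated M"

definition irreducible :: "('a, 'u) amod \<Rightarrow> bool" where
  "irreducible M \<longleftrightarrow> mcarrier M \<noteq> {mzero M} \<and>
     (\<forall>S. submod M S \<longrightarrow> S = {mzero M} \<or> S = mcarrier M)"

definition Ae_mod :: "(complex \<Rightarrow> 'a::ring \<Rightarrow> 'a) \<Rightarrow> 'a \<Rightarrow> ('a, 'a) amod" where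
  "Ae_mod sc e = \<lparr>mcarrier = {a * e | a. True}, madd = (+), mzero = 0,
                  msc = sc, mact = (*)\<rparr>"

text \<open>Universe type for auxiliary modules: every irreducible
 quasicoherent module, every coherent module, and all modules needed to test
 projectivity of a coherent module are isomorphic to one carried by this type.\<close>
type_synonym 'a univ = "(nat \<Rightarrow> complex \<times> 'a) set"

definition generating_idem :: "(complex \<Rightarrow> 'a::ring \<Rightarrow> 'a) \<Rightarrow> 'a \<Rightarrow> bool" where
  "generating_idem sc e \<longleftrightarrow> e * e = e \<and>
     (\<forall>V :: ('a, 'a univ) amod. is_amod sc V \<and> quasicoherent V \<and> irreducible V \<longrightarrow>
        (\<exists>f. amod_hom (Ae_mod sc e) V f \<and> f ` mcarrier (Ae_mod sc e) = mcarrier V))"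

definition strongly_AUF :: "(complex \<Rightarrow> 'a::ring \<Rightarrow> 'a) \<Rightarrow> bool" where
  "strongly_AUF sc \<longleftrightarrow> AUF sc \<and> (\<exists>e. generating_idem sc e)"

definition projective :: "(complex \<Rightarrow> 'a::ring \<Rightarrow> 'a) \<Rightarrow> ('a, 'm) amod \<Rightarrow> bool" where
  "projective sc M \<longleftrightarrow>
     (\<forall>(N :: ('a, 'a univ) amod) (N' :: ('a, 'a univ) amod) g f.
        is_amod sc N \<and> is_amod sc N' \<and> amod_hom N N' g \<and> g ` mcarrier N = mcarrier N' \<and>
        amod_hom M N' f \<longrightarrow>
        (\<exists>h. amod_hom M N h \<and> (\<forall>x\<in>mcarrier M. g (h x) = f x)))"

definition msum :: "('a, 'u) amod \<Rightarrow> 'u list \<Rightarrow> 'u" where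
  "msum N xs = foldr (madd N) xs (mzero N)"

definition proj_gen_Coh :: "(complex \<Rightarrow> 'a::ring \<Rightarrow> 'a) \<Rightarrow> ('a, 'm) amod \<Rightarrow> bool" where
  "proj_gen_Coh sc M \<longleftrightarrow> coherent M \<and> projective sc M \<and>
     (\<forall>N :: ('a, 'a univ) amod. is_amod sc N \<and> coherent N \<longrightarrow>
        (\<exists>fs. (\<forall>f\<in>set fs. amod_hom M N f) \<and>
           (\<forall>y\<in>mcarrier N. \<exists>xs. length xs = length fs \<and> set xs \<subseteq> mcarrier M \<and>
               y = msum N (map2 (\<lambda>f x. f x) fs xs))))"

definition SLF :: "(complex \<Rightarrow> 'a::ring \<Rightarrow> 'a) \<Rightarrow> ('a \<Rightarrow> complex) \<Rightarrow> bool" where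
  "SLF sc \<psi> \<longleftrightarrow> (\<forall>x y. \<psi> (x + y) = \<psi> x + \<psi> y) \<and> (\<forall>c x. \<psi> (sc c x) = c * \<psi> x) \<and>
     (\<forall>x y. \<psi> (x * y) = \<psi> (y * x))"

definition nondeg_A :: "('a::ring \<Rightarrow> complex) \<Rightarrow> bool" where
  "nondeg_A \<psi> \<longleftrightarrow> (\<forall>x. (\<forall>y. \<psi> (x * y) = 0) \<longrightarrow> x = 0)"

text \<open>B = End_A(M)^op: elements are A-module endomorphisms of M, with
 product x \<cdot> y = y \<circ> x (so that \<xi>\<cdot>T = T \<xi> is a right action); zero is the zero map.\<close>
definition nondeg_B :: "('a, 'm) amod \<Rightarrow> (('m \<Rightarrow> 'm) \<Rightarrow> complex) \<Rightarrow> bool" where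
  "nondeg_B M \<phi> \<longleftrightarrow> (\<forall>x. amod_hom M M x \<and> (\<forall>y. amod_hom M M y \<longrightarrow> \<phi> (y \<circ> x) = 0)
       \<longrightarrow> (\<forall>\<xi>\<in>mcarrier M. x \<xi> = mzero M))"

text \<open>Admissible data for the right pseudotrace: idempotent e and maps
 \<beta>_j : Ae \<rightarrow> M, \<beta>check^j : M \<rightarrow> Ae with sum_j \<beta>_j \<circ> \<beta>check^j = id_M.\<close>
definition pt_data :: "(complex \<Rightarrow> 'a::ring \<Rightarrow> 'a) \<Rightarrow> ('a, 'm) amod \<Rightarrow> 'a \<Rightarrow>
    (('a \<Rightarrow> 'm) \<times> ('m \<Rightarrow> 'a)) list \<Rightarrow> bool" where
  "pt_data sc M e bs \<longleftrightarrow> e * e = e \<and>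
     (\<forall>p\<in>set bs. amod_hom (Ae_mod sc e) M (fst p) \<and> amod_hom M (Ae_mod sc e) (snd p)) \<and>
     (\<forall>\<xi>\<in>mcarrier M. msum M (map (\<lambda>p. fst p (snd p \<xi>)) bs) = \<xi>)"

definition pseudotrace :: "('a::ring \<Rightarrow> complex) \<Rightarrow> 'a \<Rightarrow>
    (('a \<Rightarrow> 'm) \<times> ('m \<Rightarrow> 'a)) list \<Rightarrow> ('m \<Rightarrow> 'm) \<Rightarrow> complex" where
  "pseudotrace \<psi> e bs T = sum_list (map (\<lambda>p. \<psi> (snd p (T (fst p e)))) bs)"

end

theory Submission
  imports Defs
begin


lemma calg_D:
  assumes "calg sc"
  shows "sc c (x + y) = sc c x + sc c y" "sc (c + d) x = sc c x + sc d x"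
    "sc (c * d) x = sc c (sc d x)" "sc 1 x = x" "sc c (x * y) = sc c x * y"
    "sc c (x * y) = x * sc c y"
  using assms unfolding calg_def by auto

lemma calg_zero1: assumes "calg sc" shows "sc 0 x = 0"
proof -
  have "sc (0+0) x = sc 0 x + sc 0 x" by (rule calg_D(2)[OF assms])
  then show ?thesis by simp
qed

lemma calg_neg: assumes "calg sc" shows "x + sc (-1) x = 0"
proof -
  have "sc (1 + -1) x = sc 1 x + sc (-1) x" by (rule calg_D(2)[OF assms])
  then show ?thesis using calg_zero1[OF assms] calg_D(4)[OF assms] by simp
qed


lemma is_amod_Ae: assumes sc: "calg sc" shows "is_amod sc (Ae_mod sc e)"
  unfolding is_amod_def Let_def Ae_mod_def amod.simps
proof (intro conjI allI ballI)
  have "(0::'a) = 0 * e" by simp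
  then show "0 \<in> {a * e |a. True}" by blast
next
  fix x y assume "x \<in> {a * e |a. True}" "y \<in> {a * e |a. True}"
  then show "x + y \<in> {a * e |a. True}" by (auto simp: distrib_right[symmetric])
next
  fix c x assume "x \<in> {a * e |a. True}"
  then show "sc c x \<in> {a * e |a. True}" using calg_D(5)[OF sc] by auto
next
  fix a x assume "x \<in> {a * e |a. True}"
  then show "a * x \<in> {a * e |a. True}" by (auto simp: mult.assoc[symmetric])
next
  fix x y z :: 'a show "x + y + z = x + (y + z)" by (simp add: add.assoc)
next
  fix x y :: 'a show "x + y = y + x" by (simp add: add.commute)
next
  fix x :: 'a show "0 + x = x" by simp
next
  fix x :: 'a show "x + sc (-1) x = 0" by (rule calg_neg[OF sc])
next
  fix c x y show "sc c (x + y) = sc c x + sc c y" by (rule calg_D(1)[OF sc])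
next
  fix c d x show "sc (c + d) x = sc c x + sc d x" by (rule calg_D(2)[OF sc])
next
  fix c d x show "sc (c * d) x = sc c (sc d x)" by (rule calg_D(3)[OF sc])
next
  fix x show "sc 1 x = x" by (rule calg_D(4)[OF sc])
next
  fix a x y :: 'a show "a * (x + y) = a * x + a * y" by (simp add: distrib_left)
next
  fix a b x :: 'a show "(a + b) * x = a * x + b * x" by (simp add: distrib_right)
next
  fix a b x :: 'a show "a * b * x = a * (b * x)" by (simp add: mult.assoc)
next
  fix c a x show "sc c a * x = sc c (a * x)" by (rule calg_D(5)[OF sc, symmetric])
next
  fix c a x show "a * sc c x = sc c (a * x)" by (rule calg_D(6)[OF sc, symmetric])
qed


lemma am_D:
  assumes "is_amod sc M"
  shows "mzero M \<in> mcarrier M"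
    "x \<in> mcarrier M \<Longrightarrow> y \<in> mcarrier M \<Longrightarrow> madd M x y \<in> mcarrier M"
    "x \<in> mcarrier M \<Longrightarrow> msc M c x \<in> mcarrier M"
    "x \<in> mcarrier M \<Longrightarrow> mact M a x \<in> mcarrier M"
    "x \<in> mcarrier M \<Longrightarrow> y \<in> mcarrier M \<Longrightarrow> z \<in> mcarrier M \<Longrightarrow> madd M (madd M x y) z = madd M x (madd M y z)"
    "x \<in> mcarrier M \<Longrightarrow> y \<in> mcarrier M \<Longrightarrow> madd M x y = madd M y x"
    "x \<in> mcarrier M \<Longrightarrow> madd M (mzero M) x = x"
    "x \<in> mcarrier M \<Longrightarrow> madd M x (msc M (-1) x) = mzero M"
  using assms unfolding is_amod_def Let_def by auto

lemma am_idem_zero: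
  assumes M: "is_amod sc M" and z: "z \<in> mcarrier M" and zz: "madd M z z = z"
  shows "z = mzero M"
proof -
  have n: "msc M (-1) z \<in> mcarrier M" using am_D(3)[OF M z] .
  have "mzero M = madd M z (msc M (-1) z)" using am_D(8)[OF M z] by simp
  also have "\<dots> = madd M (madd M z z) (msc M (-1) z)" using zz by simp
  also have "\<dots> = madd M z (madd M z (msc M (-1) z))" using am_D(5)[OF M z z n] .
  also have "\<dots> = madd M z (mzero M)" using am_D(8)[OF M z] by simp
  also have "\<dots> = z" using am_D(6)[OF M z am_D(1)[OF M]] am_D(7)[OF M z] by simp
  finally show ?thesis by simp
qed

lemma hom_D:
  assumes "amod_hom M N f"
  shows "x \<in> mcarrier M \<Longrightarrow> f x \<in> mcarrier N"
    "x \<in> mcarrier M \<Longrightarrow> y \<in> mcarrier M \<Longrightarrow> f (madd M x y) = madd N (f x) (f y)"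
    "x \<in> mcarrier M \<Longrightarrow> f (msc M c x) = msc N c (f x)"
    "x \<in> mcarrier M \<Longrightarrow> f (mact M a x) = mact N a (f x)"
  using assms unfolding amod_hom_def by auto

lemma hom_comp:
  assumes "amod_hom M N f" "amod_hom N P g"
  shows "amod_hom M P (\<lambda>x. g (f x))"
  using assms unfolding amod_hom_def by auto

lemma hom_zero:
  assumes M: "is_amod sc M" and N: "is_amod sc N" and h: "amod_hom M N h"
  shows "h (mzero M) = mzero N"
proof -
  have z: "mzero M \<in> mcarrier M" by (rule am_D(1)[OF M])
  have "h (mzero M) = h (madd M (mzero M) (mzero M))" using am_D(7)[OF M z] by simp
  also have "\<dots> = madd N (h (mzero M)) (h (mzero M))" using hom_D(2)[OF h z z] .
  finally show ?thesis using am_idem_zero[OF N hom_D(1)[OF h z]] by simp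
qed

lemma msum_Cons: "msum M (x # xs) = madd M x (msum M xs)"
  by (simp add: msum_def)

lemma msum_in:
  assumes M: "is_amod sc M" shows "set xs \<subseteq> mcarrier M \<Longrightarrow> msum M xs \<in> mcarrier M"
  by (induct xs) (auto simp: msum_def am_D[OF M])

lemma msum_zeros:
  assumes M: "is_amod sc M" shows "(\<forall>x\<in>set xs. x = mzero M) \<Longrightarrow> msum M xs = mzero M"
  by (induct xs) (auto simp: msum_def am_D[OF M])

lemma hom_msum:
  assumes M: "is_amod sc M" and N: "is_amod sc N" and h: "amod_hom M N h"
  shows "set xs \<subseteq> mcarrier M \<Longrightarrow> h (msum M xs) = msum N (map h xs)"
proof (induct xs)
  case Nil
  then show ?case using hom_zero[OF M N h] by (simp add: msum_def)
next
  case (Cons a xs)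
  then have "msum M xs \<in> mcarrier M" using msum_in[OF M] by auto
  then show ?case using Cons hom_D(2)[OF h, of a "msum M xs"] by (simp add: msum_Cons)
qed

lemma msum_Ae: "msum (Ae_mod sc e) xs = sum_list xs"
  by (induct xs) (simp_all add: msum_def Ae_mod_def)

lemma Ae_carrier: "u \<in> mcarrier (Ae_mod sc e) \<longleftrightarrow> (\<exists>a. u = a * e)"
  by (simp add: Ae_mod_def)

lemma Ae_right: "e * e = e \<Longrightarrow> u \<in> mcarrier (Ae_mod sc e) \<Longrightarrow> u * e = u"
  by (auto simp: Ae_mod_def mult.assoc)

lemma beta_act:
  assumes ee: "e * e = e" and b: "amod_hom (Ae_mod sc e) M \<beta>"
    and u: "u \<in> mcarrier (Ae_mod sc e)"
  shows "\<beta> u = mact M u (\<beta> e)"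
proof -
  have eA: "e \<in> mcarrier (Ae_mod sc e)" using ee by (simp add: Ae_mod_def) (rule exI[of _ e], simp)
  have "\<beta> u = \<beta> (mact (Ae_mod sc e) u e)" using Ae_right[OF ee u] by (simp add: Ae_mod_def)
  also have "\<dots> = mact M u (\<beta> e)" using hom_D(4)[OF b eA] .
  finally show ?thesis .
qed

lemma e_in_Ae: "e * e = e \<Longrightarrow> e \<in> mcarrier (Ae_mod sc e)"
  by (simp add: Ae_mod_def) (rule exI[of _ e], simp)

lemma in_Ae: "u * e = u \<Longrightarrow> u \<in> mcarrier (Ae_mod sc e)"
  by (simp add: Ae_mod_def) (rule exI[of _ u], simp)

lemma hom_to_Ae_act:
  assumes g: "amod_hom M (Ae_mod sc e) g" and x: "x \<in> mcarrier M"
  shows "g (mact M a x) = a * g x"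
  using hom_D(4)[OF g x] by (simp add: Ae_mod_def)

lemma rho_hom:
  assumes sc: "calg sc" and ee: "e * e = e" and c: "c * e = c"
  shows "amod_hom (Ae_mod sc e) (Ae_mod sc e) (\<lambda>u. u * c)"
  unfolding amod_hom_def
proof (intro conjI ballI allI)
  fix x assume "x \<in> mcarrier (Ae_mod sc e)"
  then obtain a where x: "x = a * e" by (auto simp: Ae_mod_def)
  have "x * c * e = x * c" using c by (simp add: mult.assoc)
  then show "x * c \<in> mcarrier (Ae_mod sc e)" by (rule in_Ae)
next
  fix x y show "madd (Ae_mod sc e) x y * c = madd (Ae_mod sc e) (x * c) (y * c)"
    by (simp add: Ae_mod_def distrib_right)
next
  fix k x show "msc (Ae_mod sc e) k x * c = msc (Ae_mod sc e) k (x * c)"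
    by (simp add: Ae_mod_def calg_D(5)[OF sc])
next
  fix a x show "mact (Ae_mod sc e) a x * c = mact (Ae_mod sc e) a (x * c)"
    by (simp add: Ae_mod_def mult.assoc)
qed

lemma beta_G:
  assumes ee: "e * e = e" and b: "amod_hom (Ae_mod sc e) M \<beta>"
    and G: "amod_hom M (Ae_mod sc e) G" and u: "u \<in> mcarrier (Ae_mod sc e)"
  shows "G (\<beta> u) = u * G (\<beta> e)"
  using beta_act[OF ee b u] hom_to_Ae_act[OF G hom_D(1)[OF b e_in_Ae[OF ee]]] by simp

lemma SLF_D:
  assumes "SLF sc \<psi>"
  shows "\<psi> (x + y) = \<psi> x + \<psi> y" "\<psi> (x * y) = \<psi> (y * x)" "\<psi> 0 = 0"
    "\<psi> (sum_list (map f xs)) = sum_list (map (\<lambda>x. \<psi> (f x)) xs)"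
proof -
  have add: "\<And>x y. \<psi> (x + y) = \<psi> x + \<psi> y" using assms unfolding SLF_def by auto
  show "\<psi> (x + y) = \<psi> x + \<psi> y" by (rule add)
  show "\<psi> (x * y) = \<psi> (y * x)" using assms unfolding SLF_def by auto
  have z: "\<psi> 0 = 0" using add[of 0 0] by simp
  show "\<psi> 0 = 0" by (rule z)
  show "\<psi> (sum_list (map f xs)) = sum_list (map (\<lambda>x. \<psi> (f x)) xs)"
    by (induct xs) (simp_all add: z add)
qed


lemma pt_D:
  assumes "pt_data sc M e bs"
  shows "e * e = e" "p \<in> set bs \<Longrightarrow> amod_hom (Ae_mod sc e) M (fst p)"
    "p \<in> set bs \<Longrightarrow> amod_hom M (Ae_mod sc e) (snd p)"
    "\<xi> \<in> mcarrier M \<Longrightarrow> msum M (map (\<lambda>p. fst p (snd p \<xi>)) bs) = \<xi>"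
  using assms unfolding pt_data_def by auto

lemma dir1:
  assumes sc: "calg sc" and M: "is_amod sc M" and psi: "SLF sc \<psi>"
    and pt: "pt_data sc M e bs" and nd: "nondeg_A \<psi>"
  shows "nondeg_B M (pseudotrace \<psi> e bs)"
  unfolding nondeg_B_def
proof (intro allI impI ballI)
  fix x \<xi>
  assume xh: "amod_hom M M x \<and> (\<forall>y. amod_hom M M y \<longrightarrow> pseudotrace \<psi> e bs (y \<circ> x) = 0)"
    and \<xi>: "\<xi> \<in> mcarrier M"
  have x: "amod_hom M M x" and H: "\<And>y. amod_hom M M y \<Longrightarrow> pseudotrace \<psi> e bs (y \<circ> x) = 0"
    using xh by auto
  let ?A = "Ae_mod sc e"
  have ee: "e * e = e" using pt_D(1)[OF pt] .
  have AM: "is_amod sc ?A" using is_amod_Ae[OF sc] .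
  have eA: "e \<in> mcarrier ?A" using e_in_Ae[OF ee] .
  have bh: "\<And>p. p \<in> set bs \<Longrightarrow> amod_hom ?A M (fst p)" using pt_D(2)[OF pt] .
  have ch: "\<And>p. p \<in> set bs \<Longrightarrow> amod_hom M ?A (snd p)" using pt_D(3)[OF pt] .
  have z0: "snd l (x (fst k e)) = 0" if k: "k \<in> set bs" and l: "l \<in> set bs" for k l
  proof -
    let ?z = "snd l (x (fst k e))"
    have G: "amod_hom M ?A (\<lambda>\<xi>. snd l (x \<xi>))" using hom_comp[OF x ch[OF l]] .
    have fke: "fst k e \<in> mcarrier M" using hom_D(1)[OF bh[OF k] eA] .
    have ez: "e * ?z = ?z"
      using beta_G[OF ee bh[OF k] G eA] ee by simp
    have ps: "\<psi> (?z * a) = 0" for a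
    proof -
      define b where "b = a * e"
      have be: "b * e = b" unfolding b_def using ee by (simp add: mult.assoc)
      define y where "y = (\<lambda>\<xi>. fst k (snd l \<xi> * b))"
      have yh: "amod_hom M M y" unfolding y_def
        using hom_comp[OF hom_comp[OF ch[OF l] rho_hom[OF sc ee be]] bh[OF k]] .
      have "pseudotrace \<psi> e bs (y \<circ> x) = 0" using H[OF yh] .
      moreover have "pseudotrace \<psi> e bs (y \<circ> x) =
          sum_list (map (\<lambda>j. \<psi> (snd j (fst k e) * snd l (x (fst j e)) * b)) bs)"
        unfolding pseudotrace_def
      proof (rule arg_cong[where f=sum_list], rule map_cong[OF refl])
        fix j assume j: "j \<in> set bs"
        have w: "snd l (x (fst j e)) * b \<in> mcarrier ?A"
          unfolding b_def by (auto simp: Ae_mod_def mult.assoc[symmetric])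
        have "snd j ((y \<circ> x) (fst j e)) = (snd l (x (fst j e)) * b) * snd j (fst k e)"
          unfolding y_def o_def using beta_G[OF ee bh[OF k] ch[OF j] w] .
        moreover have "\<psi> ((snd l (x (fst j e)) * b) * snd j (fst k e)) = \<psi> (snd j (fst k e) * (snd l (x (fst j e)) * b))"
          by (rule SLF_D(2)[OF psi])
        ultimately show "\<psi> (snd j ((y \<circ> x) (fst j e))) = \<psi> (snd j (fst k e) * snd l (x (fst j e)) * b)"
          by (simp add: mult.assoc)
      qed
      moreover have "sum_list (map (\<lambda>j. \<psi> (snd j (fst k e) * snd l (x (fst j e)) * b)) bs)
          = \<psi> (sum_list (map (\<lambda>j. snd j (fst k e) * snd l (x (fst j e))) bs) * b)"
        by (simp add: SLF_D(4)[OF psi] sum_list_mult_const[symmetric])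
      moreover have "sum_list (map (\<lambda>j. snd j (fst k e) * snd l (x (fst j e))) bs) = ?z"
      proof -
        have "map (\<lambda>j. snd j (fst k e) * snd l (x (fst j e))) bs
            = map (\<lambda>\<xi>. snd l (x \<xi>)) (map (\<lambda>j. fst j (snd j (fst k e))) bs)"
        proof (unfold map_map o_def, rule map_cong[OF refl])
          fix j assume j: "j \<in> set bs"
          have c: "snd j (fst k e) \<in> mcarrier ?A" using hom_D(1)[OF ch[OF j] fke] .
          show "snd j (fst k e) * snd l (x (fst j e)) = snd l (x (fst j (snd j (fst k e))))"
            using beta_G[OF ee bh[OF j] G c] by simp
        qed
        moreover have sub: "set (map (\<lambda>j. fst j (snd j (fst k e))) bs) \<subseteq> mcarrier M"
          using hom_D(1)[OF bh hom_D(1)[OF ch fke]] by auto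
        have hm: "snd l (x (msum M (map (\<lambda>j. fst j (snd j (fst k e))) bs)))
           = msum ?A (map (\<lambda>\<xi>. snd l (x \<xi>)) (map (\<lambda>j. fst j (snd j (fst k e))) bs))"
          by (rule hom_msum[OF M AM G sub])
        ultimately have "sum_list (map (\<lambda>j. snd j (fst k e) * snd l (x (fst j e))) bs)
            = snd l (x (msum M (map (\<lambda>j. fst j (snd j (fst k e))) bs)))"
          by (simp only: hm msum_Ae)
        then show ?thesis using pt_D(4)[OF pt fke] by simp
      qed
      ultimately have "\<psi> (?z * b) = 0" by simp
      then have "\<psi> ((?z * a) * e) = 0" unfolding b_def by (simp add: mult.assoc)
      then have "\<psi> (e * (?z * a)) = 0" using SLF_D(2)[OF psi, of e "?z * a"] by simp
      then show ?thesis using ez by (simp add: mult.assoc[symmetric])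
    qed
    then show ?thesis using nd unfolding nondeg_A_def by blast
  qed
  have xM: "x \<xi> \<in> mcarrier M" using hom_D(1)[OF x \<xi>] .
  have s0: "snd l (x \<xi>) = 0" if l: "l \<in> set bs" for l
  proof -
    have G: "amod_hom M ?A (\<lambda>\<xi>. snd l (x \<xi>))" using hom_comp[OF x ch[OF l]] .
    have sub: "set (map (\<lambda>k. fst k (snd k \<xi>)) bs) \<subseteq> mcarrier M"
      using hom_D(1)[OF bh hom_D(1)[OF ch \<xi>]] by auto
    have "snd l (x \<xi>) = snd l (x (msum M (map (\<lambda>k. fst k (snd k \<xi>)) bs)))"
      using pt_D(4)[OF pt \<xi>] by simp
    also have "\<dots> = sum_list (map (\<lambda>k. snd l (x (fst k (snd k \<xi>)))) bs)"
      using hom_msum[OF M AM G sub] msum_Ae by (simp add: o_def)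
    also have "\<dots> = sum_list (map (\<lambda>k. 0) bs)"
    proof (rule arg_cong[where f=sum_list], rule map_cong[OF refl])
      fix k assume k: "k \<in> set bs"
      show "snd l (x (fst k (snd k \<xi>))) = 0"
        using beta_G[OF ee bh[OF k] G hom_D(1)[OF ch[OF k] \<xi>]] z0[OF k l] by simp
    qed
    finally show ?thesis by simp
  qed
  have "x \<xi> = msum M (map (\<lambda>p. fst p (snd p (x \<xi>))) bs)" using pt_D(4)[OF pt xM] by simp
  also have "\<dots> = mzero M"
  proof (rule msum_zeros[OF M], rule ballI)
    fix w assume "w \<in> set (map (\<lambda>p. fst p (snd p (x \<xi>))) bs)"
    then obtain p where p: "p \<in> set bs" and w: "w = fst p (snd p (x \<xi>))" by auto
    have "fst p 0 = mzero M" using hom_zero[OF AM M bh[OF p]] by (simp add: Ae_mod_def)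
    then show "w = mzero M" using s0[OF p] w by simp
  qed
  finally show "x \<xi> = mzero M" .
qed


lemma orth_unit:
  assumes fin: "finite G" and idem: "\<forall>f\<in>G. f * f = f"
    and orth: "\<forall>f\<in>G. \<forall>g\<in>G. f \<noteq> g \<longrightarrow> f * g = (0::'a::ring)" and f: "f \<in> G"
  shows "(\<Sum>G) * f = f" "f * (\<Sum>G) = f"
proof -
  have "(\<Sum>G) * f = (\<Sum>g\<in>G. g * f)" by (simp add: sum_distrib_right)
  also have "\<dots> = f * f + (\<Sum>g\<in>G - {f}. g * f)" using sum.remove[OF fin f] by simp
  also have "(\<Sum>g\<in>G - {f}. g * f) = 0" using orth f by (intro sum.neutral) auto
  finally show "(\<Sum>G) * f = f" using idem f by simp
  have "f * (\<Sum>G) = (\<Sum>g\<in>G. f * g)" by (simp add: sum_distrib_left)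
  also have "\<dots> = f * f + (\<Sum>g\<in>G - {f}. f * g)" using sum.remove[OF fin f] by simp
  also have "(\<Sum>g\<in>G - {f}. f * g) = 0" using orth f by (intro sum.neutral) auto
  finally show "f * (\<Sum>G) = f" using idem f by simp
qed

lemma local_unit:
  fixes sc :: "complex \<Rightarrow> 'a::ring \<Rightarrow> 'a" and a :: 'a
  assumes "AUF sc"
  shows "\<exists>u. u * u = u \<and> u * a = a \<and> a * u = a"
proof -
  obtain E :: "'a set" where EE: "(\<forall>e\<in>E. e * e = e) \<and>
      (\<forall>e\<in>E. \<forall>f\<in>E. e \<noteq> f \<longrightarrow> e * f = 0) \<and>
      (\<forall>e\<in>E. \<forall>f\<in>E. fin_dim sc (corner e f)) \<and>
      (\<forall>a. \<exists>F g. finite F \<and> F \<subseteq> E \<times> E \<and>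
             (\<forall>p\<in>F. g p \<in> corner (fst p) (snd p)) \<and> a = (\<Sum>p\<in>F. g p))"
    using assms unfolding AUF_def by (elim exE) (rule that)
  have idem: "\<forall>e\<in>E. e * e = e" using EE by (elim conjE)
  have orth: "\<forall>e\<in>E. \<forall>f\<in>E. e \<noteq> f \<longrightarrow> e * f = 0" using EE by (elim conjE)
  have dec: "\<exists>F g. finite F \<and> F \<subseteq> E \<times> E \<and>
             (\<forall>p\<in>F. g p \<in> corner (fst p) (snd p)) \<and> a = (\<Sum>p\<in>F. g p)"
    using EE by (elim conjE) (erule allE)
  obtain F g where fin: "finite F" and FE: "F \<subseteq> E \<times> E"
    and gc: "\<forall>p\<in>F. g p \<in> corner (fst p) (snd p)" and a: "a = (\<Sum>p\<in>F. g p)"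
    using dec by (elim exE conjE)
  define G where "G = fst ` F \<union> snd ` F"
  have finG: "finite G" unfolding G_def using fin by simp
  have GE: "G \<subseteq> E" unfolding G_def using FE by auto
  have idG: "\<forall>f\<in>G. f * f = f" using idem GE by auto
  have orG: "\<forall>f\<in>G. \<forall>g\<in>G. f \<noteq> g \<longrightarrow> f * g = 0"
  proof (intro ballI impI)
    fix f g assume "f \<in> G" "g \<in> G" "f \<noteq> g"
    then show "f * g = 0" using orth GE by auto
  qed
  define u where "u = \<Sum>G"
  have uu: "u * u = u"
  proof -
    have "u * u = (\<Sum>f\<in>G. u * f)" unfolding u_def by (simp add: sum_distrib_left)
    also have "\<dots> = (\<Sum>f\<in>G. f)" using orth_unit(1)[OF finG idG orG] unfolding u_def
      by (intro sum.cong) auto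
    finally show ?thesis unfolding u_def by simp
  qed
  have ug: "u * g p = g p \<and> g p * u = g p" if p: "p \<in> F" for p
  proof -
    obtain c where gp: "g p = fst p * c * snd p" using gc p unfolding corner_def by blast
    have "fst p \<in> G" "snd p \<in> G" using p unfolding G_def by auto
    then have h1: "u * fst p = fst p" and h2: "snd p * u = snd p"
      using orth_unit[OF finG idG orG] unfolding u_def by auto
    have "u * g p = (u * fst p) * c * snd p" unfolding gp by (simp add: mult.assoc)
    moreover have "g p * u = fst p * c * (snd p * u)" unfolding gp by (simp add: mult.assoc)
    ultimately show ?thesis using h1 h2 gp by simp
  qed
  have "u * a = a" unfolding a using ug by (simp add: sum_distrib_left)
  moreover have "a * u = a" unfolding a using ug by (simp add: sum_distrib_right)
  ultimately show ?thesis using uu by blast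
qed


definition emb :: "'a \<Rightarrow> 'a univ" where "emb a = {\<lambda>n. (0, a)}"
definition unemb :: "'a univ \<Rightarrow> 'a" where "unemb S = snd ((SOME f. f \<in> S) 0)"

lemma unemb_emb[simp]: "unemb (emb a) = a"
  unfolding emb_def unemb_def by simp

definition Nmod :: "(complex \<Rightarrow> 'a::ring \<Rightarrow> 'a) \<Rightarrow> 'a \<Rightarrow> ('a, 'a univ) amod" where
  "Nmod sc e = \<lparr>mcarrier = emb ` {a * e | a. True}, madd = (\<lambda>u v. emb (unemb u + unemb v)),
     mzero = emb 0, msc = (\<lambda>c u. emb (sc c (unemb u))), mact = (\<lambda>a u. emb (a * unemb u))\<rparr>"

lemma is_amod_N: assumes sc: "calg sc" shows "is_amod sc (Nmod sc e)"
  unfolding is_amod_def Let_def Nmod_def amod.simps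
proof (intro conjI allI ballI)
  have "(0::'a) = 0 * e" by simp
  then show "emb 0 \<in> emb ` {a * e |a. True}" by blast
next
  fix x y assume "x \<in> emb ` {a * e |a. True}" "y \<in> emb ` {a * e |a. True}"
  then obtain a b where "x = emb (a * e)" "y = emb (b * e)" by auto
  then have "unemb x + unemb y = (a + b) * e" by (simp add: distrib_right)
  then show "emb (unemb x + unemb y) \<in> emb ` {a * e |a. True}" by blast
next
  fix c x assume "x \<in> emb ` {a * e |a. True}"
  then obtain a where "x = emb (a * e)" by auto
  then have "sc c (unemb x) = sc c a * e" by (simp add: calg_D(5)[OF sc])
  then show "emb (sc c (unemb x)) \<in> emb ` {a * e |a. True}" by blast
next
  fix b x assume "x \<in> emb ` {a * e |a. True}"
  then obtain a where "x = emb (a * e)" by auto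
  then have "b * unemb x = (b * a) * e" by (simp add: mult.assoc)
  then show "emb (b * unemb x) \<in> emb ` {a * e |a. True}" by blast
next
  fix x y z :: "'a univ" assume "x \<in> emb ` {a * e |a. True}"
  then show "emb (unemb (emb (unemb x + unemb y)) + unemb z) = emb (unemb x + unemb (emb (unemb y + unemb z)))"
    by (simp add: add.assoc)
next
  fix x y :: "'a univ" show "emb (unemb x + unemb y) = emb (unemb y + unemb x)" by (simp add: add.commute)
next
  fix x :: "'a univ" assume "x \<in> emb ` {a * e |a. True}"
  then show "emb (unemb (emb 0) + unemb x) = x" by auto
next
  fix x :: "'a univ" show "emb (unemb x + unemb (emb (sc (- 1) (unemb x)))) = emb 0"
    by (simp add: calg_neg[OF sc])
next
  fix c and x y :: "'a univ" show "emb (sc c (unemb (emb (unemb x + unemb y)))) =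
       emb (unemb (emb (sc c (unemb x))) + unemb (emb (sc c (unemb y))))"
    by (simp add: calg_D(1)[OF sc])
next
  fix c d and x :: "'a univ" show "emb (sc (c + d) (unemb x)) = emb (unemb (emb (sc c (unemb x))) + unemb (emb (sc d (unemb x))))"
    by (simp add: calg_D(2)[OF sc])
next
  fix c d and x :: "'a univ" show "emb (sc (c * d) (unemb x)) = emb (sc c (unemb (emb (sc d (unemb x)))))"
    by (simp add: calg_D(3)[OF sc])
next
  fix x :: "'a univ" assume "x \<in> emb ` {a * e |a. True}"
  then show "emb (sc 1 (unemb x)) = x" by (auto simp: calg_D(4)[OF sc])
next
  fix a :: 'a and x y :: "'a univ" show "emb (a * unemb (emb (unemb x + unemb y))) = emb (unemb (emb (a * unemb x)) + unemb (emb (a * unemb y)))"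
    by (simp add: distrib_left)
next
  fix a b :: 'a and x :: "'a univ" show "emb ((a + b) * unemb x) = emb (unemb (emb (a * unemb x)) + unemb (emb (b * unemb x)))"
    by (simp add: distrib_right)
next
  fix a b :: 'a and x :: "'a univ" show "emb (a * b * unemb x) = emb (a * unemb (emb (b * unemb x)))"
    by (simp add: mult.assoc)
next
  fix c and a :: 'a and x :: "'a univ" show "emb (sc c a * unemb x) = emb (sc c (unemb (emb (a * unemb x))))"
    by (simp add: calg_D(5)[OF sc])
next
  fix c and a :: 'a and x :: "'a univ" show "emb (a * unemb (emb (sc c (unemb x)))) = emb (sc c (unemb (emb (a * unemb x))))"
    by (simp add: calg_D(6)[OF sc])
qed

lemma unemb_msum: "unemb (msum (Nmod sc e) ys) = sum_list (map unemb ys)"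
  by (induct ys) (simp_all add: msum_def Nmod_def)

lemma coherent_N:
  assumes sc: "calg sc" and A: "AUF sc" and ee: "e * e = e"
  shows "coherent (Nmod sc e)"
  unfolding coherent_def
proof
  show "quasicoherent (Nmod sc e)"
    unfolding quasicoherent_def
  proof
    fix x assume "x \<in> mcarrier (Nmod sc e)"
    then obtain b where x: "x = emb (b * e)" by (auto simp: Nmod_def)
    obtain u where "u * (b * e) = b * e" using local_unit[OF A] by blast
    then have "x = mact (Nmod sc e) u x" unfolding x by (simp add: Nmod_def)
    then show "\<exists>a. x = mact (Nmod sc e) a x" by blast
  qed
  show "fin_generated (Nmod sc e)"
    unfolding fin_generated_def
  proof (intro exI conjI)
    show "finite {emb e}" by simp
    have "e = e * e" using ee by simp
    then show eN: "{emb e} \<subseteq> mcarrier (Nmod sc e)" by (auto simp: Nmod_def)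
    show "gen_submod (Nmod sc e) {emb e} = mcarrier (Nmod sc e)"
    proof
      have "submod (Nmod sc e) (mcarrier (Nmod sc e))"
        using is_amod_N[OF sc] unfolding submod_def is_amod_def Let_def by auto
      then show "gen_submod (Nmod sc e) {emb e} \<subseteq> mcarrier (Nmod sc e)"
        unfolding gen_submod_def using eN by blast
      show "mcarrier (Nmod sc e) \<subseteq> gen_submod (Nmod sc e) {emb e}"
      proof
        fix y assume "y \<in> mcarrier (Nmod sc e)"
        then obtain a where y: "y = emb (a * e)" by (auto simp: Nmod_def)
        have "y \<in> S" if "submod (Nmod sc e) S" "emb e \<in> S" for S
        proof -
          have "mact (Nmod sc e) a (emb e) \<in> S" using that unfolding submod_def by blast
          then show ?thesis unfolding y by (simp add: Nmod_def)
        qed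
        then show "y \<in> gen_submod (Nmod sc e) {emb e}" unfolding gen_submod_def by auto
      qed
    qed
  qed
qed

lemma sandwich:
  fixes x :: "'a::ring"
  assumes "\<forall>q\<in>set L. \<forall>r\<in>set L. fst q * (snd q * x * fst r) * snd r = 0"
  shows "sum_list (map (\<lambda>q. fst q * snd q) L) * x * sum_list (map (\<lambda>q. fst q * snd q) L) = 0"
proof -
  let ?s = "sum_list (map (\<lambda>q. fst q * snd q) L)"
  have "?s * x * ?s = sum_list (map (\<lambda>q. fst q * snd q * x * ?s) L)"
    by (simp add: sum_list_mult_const[symmetric])
  also have "\<dots> = sum_list (map (\<lambda>q. 0) L)"
  proof (rule arg_cong[where f=sum_list], rule map_cong[OF refl])
    fix q assume q: "q \<in> set L"
    have "fst q * snd q * x * ?s = sum_list (map (\<lambda>r. fst q * snd q * x * (fst r * snd r)) L)"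
      by (simp add: sum_list_const_mult[symmetric])
    also have "\<dots> = sum_list (map (\<lambda>r. 0) L)"
      using assms q by (intro arg_cong[where f=sum_list] map_cong[OF refl]) (simp add: mult.assoc)
    finally show "fst q * snd q * x * ?s = 0" by simp
  qed
  finally show ?thesis by simp
qed


lemma psi_ideal:
  assumes psi: "SLF sc \<psi>" and I: "\<forall>y. \<psi> (x * y) = 0"
  shows "\<psi> (a1 * x * a2) = 0"
proof -
  have "\<psi> (a1 * x * a2) = \<psi> (a1 * (x * a2))" by (simp add: mult.assoc)
  also have "\<dots> = \<psi> ((x * a2) * a1)" using SLF_D(2)[OF psi] .
  also have "\<dots> = \<psi> (x * (a2 * a1))" by (simp add: mult.assoc)
  finally show ?thesis using I by simp
qed

lemma dir2:
  fixes sc :: "complex \<Rightarrow> 'a::ring \<Rightarrow> 'a" and M :: "('a, 'm) amod"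
  assumes sc: "calg sc" and A: "AUF sc" and M: "is_amod sc M" and pg: "proj_gen_Coh sc M"
    and psi: "SLF sc \<psi>" and pt: "pt_data sc M e bs" and ndB: "nondeg_B M (pseudotrace \<psi> e bs)"
  shows "nondeg_A \<psi>"
  unfolding nondeg_A_def
proof (intro allI impI)
  fix x :: 'a
  assume I: "\<forall>y. \<psi> (x * y) = 0"
  show "x = 0"
  proof (rule ccontr)
    assume x0: "x \<noteq> 0"
    let ?A = "Ae_mod sc e"
    have ee: "e * e = e" using pt_D(1)[OF pt] .
    have AM: "is_amod sc ?A" using is_amod_Ae[OF sc] .
    have eA: "e \<in> mcarrier ?A" using e_in_Ae[OF ee] .
    have bh: "\<And>p. p \<in> set bs \<Longrightarrow> amod_hom ?A M (fst p)" using pt_D(2)[OF pt] .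
    have ch: "\<And>p. p \<in> set bs \<Longrightarrow> amod_hom M ?A (snd p)" using pt_D(3)[OF pt] .
    obtain e' where e'e': "e' * e' = e'" and ex: "e' * x = x" and xe: "x * e' = x"
      using local_unit[OF A] by blast
    let ?N = "Nmod sc e'"
    have NM: "is_amod sc ?N" using is_amod_N[OF sc] .
    have coh: "coherent ?N" using coherent_N[OF sc A e'e'] .
    obtain fs where fh: "\<forall>f\<in>set fs. amod_hom M ?N f"
      and surj: "\<forall>y\<in>mcarrier ?N. \<exists>xs. length xs = length fs \<and> set xs \<subseteq> mcarrier M \<and>
               y = msum ?N (map2 (\<lambda>f x. f x) fs xs)"
      using pg NM coh unfolding proj_gen_Coh_def by blast
    have "e' = e' * e'" using e'e' by simp
    then have eN: "emb e' \<in> mcarrier ?N" by (auto simp: Nmod_def)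
    obtain xs where lxs: "length xs = length fs" and xsM: "set xs \<subseteq> mcarrier M"
      and exs: "emb e' = msum ?N (map2 (\<lambda>f x. f x) fs xs)"
      using surj eN by blast
    define Good where "Good = {q. \<exists>f\<in>set fs. \<exists>\<xi>\<in>mcarrier M. \<exists>p\<in>set bs.
        q = (snd p \<xi>, unemb (f (fst p e)))}"
    define Sp where "Sp = {z. \<exists>L. set L \<subseteq> Good \<and> z = sum_list (map (\<lambda>q. fst q * snd q) L)}"
    have Sp0: "0 \<in> Sp" unfolding Sp_def by (rule CollectI, rule exI[of _ "[]"]) simp
    have Spadd: "z1 + z2 \<in> Sp" if z1: "z1 \<in> Sp" and z2: "z2 \<in> Sp" for z1 z2
    proof -
      obtain L1 where "set L1 \<subseteq> Good" "z1 = sum_list (map (\<lambda>q. fst q * snd q) L1)"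
        using z1 unfolding Sp_def by blast
      moreover obtain L2 where "set L2 \<subseteq> Good" "z2 = sum_list (map (\<lambda>q. fst q * snd q) L2)"
        using z2 unfolding Sp_def by blast
      ultimately show ?thesis unfolding Sp_def by (intro CollectI exI[of _ "L1 @ L2"]) auto
    qed
    have Spsum: "set zs \<subseteq> Sp \<Longrightarrow> sum_list zs \<in> Sp" for zs
      by (induct zs) (auto simp: Sp0 Spadd)
    have fx: "unemb (f \<xi>) \<in> Sp" if f: "f \<in> set fs" and \<xi>: "\<xi> \<in> mcarrier M" for f \<xi>
    proof -
      have f': "amod_hom M ?N f" using fh f by blast
      have sub: "set (map (\<lambda>p. fst p (snd p \<xi>)) bs) \<subseteq> mcarrier M"
        using hom_D(1)[OF bh hom_D(1)[OF ch \<xi>]] by auto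
      have "unemb (f \<xi>) = unemb (f (msum M (map (\<lambda>p. fst p (snd p \<xi>)) bs)))"
        using pt_D(4)[OF pt \<xi>] by simp
      also have "\<dots> = sum_list (map (\<lambda>p. unemb (f (fst p (snd p \<xi>)))) bs)"
        using hom_msum[OF M NM f' sub] by (simp add: unemb_msum o_def)
      also have "\<dots> = sum_list (map (\<lambda>q. fst q * snd q) (map (\<lambda>p. (snd p \<xi>, unemb (f (fst p e)))) bs))"
      proof (unfold map_map o_def, rule arg_cong[where f=sum_list], rule map_cong[OF refl])
        fix p assume p: "p \<in> set bs"
        have u: "snd p \<xi> \<in> mcarrier ?A" using hom_D(1)[OF ch[OF p] \<xi>] .
        have "f (fst p (snd p \<xi>)) = mact ?N (snd p \<xi>) (f (fst p e))"
          using beta_act[OF ee bh[OF p] u] hom_D(4)[OF f' hom_D(1)[OF bh[OF p] eA]] by simp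
        then show "unemb (f (fst p (snd p \<xi>))) = fst (snd p \<xi>, unemb (f (fst p e))) * snd (snd p \<xi>, unemb (f (fst p e)))"
          by (simp add: Nmod_def)
      qed
      finally have fe: "unemb (f \<xi>) = sum_list (map (\<lambda>q. fst q * snd q) (map (\<lambda>p. (snd p \<xi>, unemb (f (fst p e)))) bs))" .
      have "set (map (\<lambda>p. (snd p \<xi>, unemb (f (fst p e)))) bs) \<subseteq> Good"
        unfolding Good_def using f \<xi> by auto
      then show ?thesis unfolding Sp_def using fe by blast
    qed
    have "e' = unemb (emb e')" by simp
    also have "\<dots> = unemb (msum ?N (map2 (\<lambda>f x. f x) fs xs))" using exs by (rule arg_cong)
    also have "\<dots> = sum_list (map unemb (map2 (\<lambda>f x. f x) fs xs))" by (rule unemb_msum)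
    finally have e'sum: "e' = sum_list (map unemb (map2 (\<lambda>f x. f x) fs xs))" .
    have "set (map unemb (map2 (\<lambda>f x. f x) fs xs)) \<subseteq> Sp"
    proof
      fix z assume "z \<in> set (map unemb (map2 (\<lambda>f x. f x) fs xs))"
      then obtain f \<xi> where "(f, \<xi>) \<in> set (zip fs xs)" "z = unemb (f \<xi>)" by auto
      then show "z \<in> Sp" using fx xsM by (meson set_zip_leftD set_zip_rightD subsetD)
    qed
    then have "e' \<in> Sp" by (subst e'sum) (rule Spsum)
    then obtain L where LG: "set L \<subseteq> Good" and eL: "e' = sum_list (map (\<lambda>q. fst q * snd q) L)"
      unfolding Sp_def by blast
    have "x = e' * x * e'" using ex xe by (simp add: mult.assoc)
    then have "\<not> (\<forall>q\<in>set L. \<forall>r\<in>set L. fst q * (snd q * x * fst r) * snd r = 0)"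
    proof (intro notI)
      assume xx: "x = e' * x * e'" and H: "\<forall>q\<in>set L. \<forall>r\<in>set L. fst q * (snd q * x * fst r) * snd r = 0"
      have "e' * x * e' = 0" using sandwich[OF H] by (simp only: eL[symmetric])
      then show False using xx x0 by simp
    qed
    then obtain q r where q: "q \<in> Good" and r: "r \<in> Good"
      and qr: "fst q * (snd q * x * fst r) * snd r \<noteq> 0" using LG by blast
    obtain f \<xi> p where f: "f \<in> set fs" and \<xi>: "\<xi> \<in> mcarrier M" and p: "p \<in> set bs"
      and qd: "q = (snd p \<xi>, unemb (f (fst p e)))" using q unfolding Good_def by blast
    obtain f2 \<xi>2 p2 where f2: "f2 \<in> set fs" and \<xi>2: "\<xi>2 \<in> mcarrier M" and p2: "p2 \<in> set bs"
      and rd: "r = (snd p2 \<xi>2, unemb (f2 (fst p2 e)))" using r unfolding Good_def by blast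
    define c where "c = snd q * x * fst r"
    have ce: "c * e = c"
    proof -
      have re: "fst r * e = fst r" using Ae_right[OF ee hom_D(1)[OF ch[OF p2] \<xi>2]] rd by simp
      show ?thesis unfolding c_def using re by (simp add: mult.assoc)
    qed
    define T where "T = (\<lambda>\<zeta>. fst p2 (snd p \<zeta> * c))"
    have Th: "amod_hom M M T" unfolding T_def
      using hom_comp[OF hom_comp[OF ch[OF p] rho_hom[OF sc ee ce]] bh[OF p2]] .
    have Tr0: "pseudotrace \<psi> e bs (y \<circ> T) = 0" if yh: "amod_hom M M y" for y
    proof -
      have "pseudotrace \<psi> e bs (y \<circ> T) = sum_list (map (\<lambda>j. 0) bs)"
        unfolding pseudotrace_def
      proof (rule arg_cong[where f=sum_list], rule map_cong[OF refl])
        fix j assume j: "j \<in> set bs"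
        have G: "amod_hom M ?A (\<lambda>\<zeta>. snd j (y \<zeta>))" using hom_comp[OF yh ch[OF j]] .
        have u: "snd p (fst j e) * c \<in> mcarrier ?A"
          by (rule in_Ae) (simp add: mult.assoc ce)
        have "snd j ((y \<circ> T) (fst j e)) = snd p (fst j e) * c * snd j (y (fst p2 e))"
          unfolding T_def o_def using beta_G[OF ee bh[OF p2] G u] .
        also have "\<dots> = (snd p (fst j e) * snd q) * x * (fst r * snd j (y (fst p2 e)))"
          unfolding c_def by (simp add: mult.assoc)
        finally show "\<psi> (snd j ((y \<circ> T) (fst j e))) = 0" using psi_ideal[OF psi I] by simp
      qed
      then show ?thesis by simp
    qed
    then have "\<forall>\<zeta>\<in>mcarrier M. T \<zeta> = mzero M" using ndB Th unfolding nondeg_B_def by blast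
    then have T0: "T \<xi> = mzero M" using \<xi> by blast
    have f2h: "amod_hom M ?N f2" using fh f2 by blast
    have "f2 (T \<xi>) = emb 0" using T0 hom_zero[OF M NM f2h] by (simp add: Nmod_def)
    moreover have "unemb (f2 (T \<xi>)) = fst q * c * snd r"
    proof -
      have u: "snd p \<xi> * c \<in> mcarrier ?A"
        by (rule in_Ae) (simp add: mult.assoc ce)
      have "f2 (T \<xi>) = mact ?N (snd p \<xi> * c) (f2 (fst p2 e))"
        unfolding T_def using beta_act[OF ee bh[OF p2] u] hom_D(4)[OF f2h hom_D(1)[OF bh[OF p2] eA]] by simp
      then show ?thesis using qd rd by (simp add: Nmod_def)
    qed
    ultimately show False using qr unfolding c_def by (simp add: mult.assoc)
  qed
qed

theorem theorem10p4:
  fixes sc :: "complex \<Rightarrow> 'a::ring \<Rightarrow> 'a"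
    and M :: "('a, 'm) amod"
    and \<psi> :: "'a \<Rightarrow> complex"
    and e :: 'a
    and bs :: "(('a \<Rightarrow> 'm) \<times> ('m \<Rightarrow> 'a)) list"
  assumes "calg sc"
    and "strongly_AUF sc"
    and "is_amod sc M"
    and "proj_gen_Coh sc M"
    and "SLF sc \<psi>"
    and "pt_data sc M e bs"
  shows "nondeg_A \<psi> \<longleftrightarrow> nondeg_B M (pseudotrace \<psi> e bs)"
  using dir1[OF assms(1,3,5,6)] dir2[OF assms(1) _ assms(3,4,5,6)] assms(2)
  unfolding strongly_AUF_def by blast

end
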